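(* Let $\psi$ be a branching mechanism with $\boldsymbol{\delta}>1$, and define for $v\in(0,\infty)$ $$I(v)=\int_v^\infty\frac{\mathrm{d}b}{\sqrt{\int_v^b\psi(a)\,\mathrm{d}a}}.$$ Then there exists a constant $C\in(0,\infty)$, depending only on $\psi$, such that for all $v\in(1,\infty)$ and all $r\in(0,\infty)$ with $r\le I(v)$, one has $v\le\psi'^{-1}(4Cr^{-2})$, where $\psi'^{-1}$ is the inverse of $\psi'$.
   Context: A branching mechanism is $\psi(\lambda)=\alpha\lambda+\beta\lambda^2+\int_{(0,\infty)}(e^{-\lambda r}-1+\lambda r)\pi(\mathrm{d}r)$ with $\alpha,\beta\ge0$ and $\pi$ a Borel measure on $(0,\infty)$ with $\int(r\wedge r^2)\pi(\mathrm{d}r)<\infty$. $\boldsymbol{\delta}=\sup\{c\ge0:\exists C\in(0,\infty),\ C\psi(\mu)\mu^{-c}\le\psi(\lambda)\lambda^{-c}\ \forall\,1\le\mu\le\lambda\}$. (Under $\boldsymbol{\delta}>1$ the integral $I(v)$ is finite.) *)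

theory Defs
  imports "HOL-Analysis.Analysis"
begin

text \<open>A branching mechanism: alpha, beta >= 0 and pi a Borel measure on (0,infinity)
  (represented as a Borel measure on the reals with no mass on (-infinity,0])
  with finite integral of min r (r^2).\<close>
definition branching_params :: "real \<Rightarrow> real \<Rightarrow> real measure \<Rightarrow> bool" where
  "branching_params \<alpha> \<beta> \<pi> \<longleftrightarrow>
     \<alpha> \<ge> 0 \<and> \<beta> \<ge> 0 \<and> sets \<pi> = sets borel \<and> emeasure \<pi> {..0} = 0 \<and>
     (\<integral>\<^sup>+ r. ennreal (min r (r\<^sup>2)) \<partial>\<pi>) < \<infinity>"

definition psi :: "real \<Rightarrow> real \<Rightarrow> real measure \<Rightarrow> real \<Rightarrow> real" where
  "psi \<alpha> \<beta> \<pi> l = \<alpha> * l + \<beta> * l\<^sup>2 +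
     (\<integral>r. (exp (- l * r) - 1 + l * r) \<partial>\<pi>)"

definition delta_exp :: "(real \<Rightarrow> real) \<Rightarrow> ereal" where
  "delta_exp \<Psi> = Sup {ereal c | c. c \<ge> 0 \<and> (\<exists>C>0. \<forall>m l. 1 \<le> m \<and> m \<le> l \<longrightarrow>
       C * \<Psi> m * m powr (- c) \<le> \<Psi> l * l powr (- c))}"

definition I_fun :: "(real \<Rightarrow> real) \<Rightarrow> real \<Rightarrow> ennreal" where
  "I_fun \<Psi> v = (\<integral>\<^sup>+ b. indicator {v<..} b * ennreal (1 / sqrt (integral {v..b} \<Psi>)) \<partial>lborel)"

end

theory Submission
  imports Defs
begin



lemma E1: "(0::real) \<le> exp (-x) - 1 + x"
  using exp_ge_add_one_self[of "-x"] by simp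

lemma E2: "exp (-x) - 1 + x \<le> x * (1 - exp (-x::real))"
proof -
  have "exp (-x) * (1 + x) \<le> exp (-x) * exp x"
    by (intro mult_left_mono) auto
  then have "exp (-x) * (1 + x) \<le> 1" by (simp flip: exp_add)
  then show ?thesis by (simp add: algebra_simps)
qed

lemma E3: "1 - exp (-x) \<le> (x::real)"
  using E1[of x] by simp

lemma E4:
  assumes "(0::real) \<le> x"
  shows "x * (1 - exp (-x)) \<le> 2 * (exp (-x) - 1 + x)"
proof -
  define f where "f t = 2 * (exp (-t) - 1 + t) - t * (1 - exp (-t))" for t :: real
  have "f 0 \<le> f x"
  proof (rule DERIV_nonneg_imp_nondecreasing[OF assms])
    fix t :: real assume "0 \<le> t" "t \<le> x"
    have d: "(f has_real_derivative (2 * (- exp (-t) + 1) - (1 * (1 - exp (-t)) + t * exp (-t)))) (at t)"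
      unfolding f_def by (auto intro!: derivative_eq_intros)
    have "0 \<le> exp (-t) * (exp t - 1 - t)"
      using exp_ge_add_one_self[of t] by (intro mult_nonneg_nonneg) (auto simp: algebra_simps)
    then have "0 \<le> 2 * (- exp (-t) + 1) - (1 * (1 - exp (-t)) + t * exp (-t))"
      by (simp add: algebra_simps exp_minus_inverse)
    with d show "\<exists>y. (f has_real_derivative y) (at t) \<and> 0 \<le> y" by blast
  qed
  then show ?thesis by (simp add: f_def)
qed

lemma E5:
  assumes "(0::real) \<le> x" "x \<le> y"
  shows "0 \<le> (exp (-y) - 1 + y) - (exp (-x) - 1 + x)"
    and "(exp (-y) - 1 + y) - (exp (-x) - 1 + x) \<le> (y - x) * (1 - exp (-y))"
proof -
  have a: "exp (-x) - exp (-y) = exp (-x) * (1 - exp (-(y - x)))"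
    by (simp add: algebra_simps flip: exp_add)
  have "exp (-x) * (1 - exp (-(y - x))) \<le> 1 * (y - x)"
    using E3[of "y-x"] assms by (intro mult_mono) auto
  then show "0 \<le> (exp (-y) - 1 + y) - (exp (-x) - 1 + x)" using a by simp
  have "exp (-y) * (1 + (y - x)) \<le> exp (-y) * exp (y - x)"
    by (intro mult_left_mono) auto
  also have "\<dots> = exp (-x)" by (simp flip: exp_add)
  finally show "(exp (-y) - 1 + y) - (exp (-x) - 1 + x) \<le> (y - x) * (1 - exp (-y))"
    by (simp add: algebra_simps)
qed

lemma E6: assumes "(0::real) < x" shows "0 < exp (-x) - 1 + x"
proof -
  have "0 < x * (1 - exp (-x))" using assms by simp
  with E4[of x] assms show ?thesis by (smt (verit))
qed




definition gg :: "real \<Rightarrow> real \<Rightarrow> real" where "gg l r = exp (- l * r) - 1 + l * r"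
definition dg :: "real \<Rightarrow> real \<Rightarrow> real" where "dg l r = r * (1 - exp (- l * r))"
definition ww :: "real \<Rightarrow> real" where "ww r = min r (r\<^sup>2)"

lemma gg_meas[measurable]: "(\<lambda>r. gg l r) \<in> borel_measurable borel" unfolding gg_def by measurable
lemma dg_meas[measurable]: "(\<lambda>r. dg l r) \<in> borel_measurable borel" unfolding dg_def by measurable
lemma ww_meas[measurable]: "ww \<in> borel_measurable borel" unfolding ww_def by measurable

lemma B2:
  assumes "0 < r" "0 \<le> l"
  shows "0 \<le> dg l r" "dg l r \<le> (1 + l) * ww r"
proof -
  have e: "exp (- l * r) \<le> 1" using assms by (simp add: mult_nonneg_nonneg)
  then show "0 \<le> dg l r" using assms unfolding dg_def by simp
  have t: "1 - exp (- l * r) \<le> l * r" using E3[of "l*r"] by simp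
  show "dg l r \<le> (1 + l) * ww r"
  proof (cases "r \<le> 1")
    case True
    then have w: "ww r = r\<^sup>2" unfolding ww_def using assms by (simp add: power2_eq_square mult_left_le)
    have "dg l r \<le> r * (l * r)" unfolding dg_def using t assms by (intro mult_left_mono) auto
    also have "\<dots> \<le> (1 + l) * r\<^sup>2" using assms by (simp add: power2_eq_square algebra_simps)
    finally show ?thesis using w by simp
  next
    case False
    then have w: "ww r = r" unfolding ww_def using assms by (simp add: power2_eq_square)
    have "dg l r \<le> r * 1" unfolding dg_def using assms by (intro mult_left_mono) auto
    also have "\<dots> \<le> (1 + l) * r" using assms by simp
    finally show ?thesis using w by simp
  qed
qed

lemma B1:
  assumes "0 < r" "0 \<le> l"
  shows "0 \<le> gg l r" "gg l r \<le> l * dg l r" "gg l r \<le> (1 + l)\<^sup>2 * ww r"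
proof -
  show "0 \<le> gg l r" using E1[of "l*r"] unfolding gg_def by simp
  show a: "gg l r \<le> l * dg l r" using E2[of "l*r"] unfolding gg_def dg_def by (simp add: algebra_simps)
  have "l * dg l r \<le> l * ((1 + l) * ww r)" using B2[OF assms] assms by (intro mult_left_mono) auto
  also have "\<dots> \<le> (1 + l)\<^sup>2 * ww r"
  proof -
    have "0 \<le> ww r" unfolding ww_def using assms by auto
    moreover have "l * (1 + l) \<le> (1 + l)\<^sup>2" using assms by (simp add: power2_eq_square)
    ultimately have "(l * (1 + l)) * ww r \<le> (1 + l)\<^sup>2 * ww r" by (intro mult_right_mono)
    then show ?thesis by (simp add: algebra_simps)
  qed
  finally show "gg l r \<le> (1 + l)\<^sup>2 * ww r" using a by simp
qed

lemma B4: assumes "0 < r" "0 \<le> l" shows "l * dg l r \<le> 2 * gg l r"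
  using E4[of "l*r"] assms unfolding gg_def dg_def by (simp add: algebra_simps)

lemma B5:
  assumes "0 < r" "0 \<le> b" "b \<le> a"
  shows "0 \<le> gg a r - gg b r" "gg a r - gg b r \<le> (a - b) * dg a r"
proof -
  have "0 \<le> b * r" "b * r \<le> a * r" using assms by (auto intro: mult_right_mono)
  note E5[OF this]
  then show "0 \<le> gg a r - gg b r" "gg a r - gg b r \<le> (a - b) * dg a r"
    unfolding gg_def dg_def by (simp_all add: algebra_simps)
qed

lemma B6: assumes "0 < r" "b < a" shows "dg b r < dg a r"
  using assms unfolding dg_def by (auto intro!: mult_strict_left_mono)

lemma B7: assumes "0 < r" "0 < l" shows "0 < gg l r"
  using E6[of "l*r"] assms unfolding gg_def by simp

lemma gg_deriv: "((\<lambda>l. gg l r) has_real_derivative dg l r) (at l)"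
  unfolding gg_def dg_def by (auto intro!: derivative_eq_intros simp: algebra_simps)

locale bm =
  fixes \<alpha> \<beta> :: real and \<pi> :: "real measure"
  assumes bp: "branching_params \<alpha> \<beta> \<pi>"
begin

lemma alpha: "0 \<le> \<alpha>" and beta: "0 \<le> \<beta>" and sets_pi: "sets \<pi> = sets borel"
  and neg0: "emeasure \<pi> {..0} = 0" and finw: "(\<integral>\<^sup>+ r. ennreal (min r (r\<^sup>2)) \<partial>\<pi>) < \<infinity>"
  using bp unfolding branching_params_def by auto

lemma space_pi: "space \<pi> = UNIV"
  using sets_eq_imp_space_eq[OF sets_pi] by simp

lemma meas: "f \<in> borel_measurable borel \<Longrightarrow> f \<in> borel_measurable \<pi>"
  by (simp only: measurable_cong_sets[OF sets_pi refl])

lemma AE_pos: "AE r in \<pi>. 0 < r"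
proof (rule AE_I'[of "{..0}"])
  show "{..0} \<in> null_sets \<pi>" using neg0 sets_pi by (auto simp: null_sets_def)
qed (auto simp: space_pi)

lemma int_ww: "integrable \<pi> ww"
proof (rule integrableI_nonneg)
  show "ww \<in> borel_measurable \<pi>" by (rule meas) measurable
  show "AE x in \<pi>. 0 \<le> ww x" using AE_pos by eventually_elim (auto simp: ww_def)
  show "(\<integral>\<^sup>+ x. ennreal (ww x) \<partial>\<pi>) < \<infinity>" using finw by (simp add: ww_def)
qed

lemma int_bound:
  assumes "f \<in> borel_measurable borel" "\<And>r. 0 < r \<Longrightarrow> \<bar>f r\<bar> \<le> c * ww r"
  shows "integrable \<pi> f"
proof -
  have i: "integrable \<pi> (\<lambda>r. c * ww r)" using int_ww by simp
  have m: "f \<in> borel_measurable \<pi>" by (rule meas[OF assms(1)])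
  have a: "AE x in \<pi>. norm (f x) \<le> norm (c * ww x)" using AE_pos
    by eventually_elim (use assms(2) in \<open>force intro: order_trans[OF _ abs_ge_self]\<close>)
  show ?thesis by (rule Bochner_Integration.integrable_bound[OF i m a])
qed

lemma int_gg: "0 \<le> l \<Longrightarrow> integrable \<pi> (gg l)"
  by (rule int_bound[of _ "(1+l)\<^sup>2"]) (use B1 in auto)

lemma int_dg: "0 \<le> l \<Longrightarrow> integrable \<pi> (dg l)"
  by (rule int_bound[of _ "(1+l)"]) (use B2 in auto)

definition Ip where "Ip l = (\<integral>r. gg l r \<partial>\<pi>)"
definition Dp where "Dp l = (\<integral>r. dg l r \<partial>\<pi>)"

lemma psi_eq: "psi \<alpha> \<beta> \<pi> l = \<alpha> * l + \<beta> * l\<^sup>2 + Ip l"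
  unfolding psi_def Ip_def gg_def ..

end



context bm begin

lemma meas_gg: "gg l \<in> borel_measurable \<pi>" by (rule meas) measurable
lemma meas_dg: "dg l \<in> borel_measurable \<pi>" by (rule meas) measurable

lemma Ip_deriv: assumes "0 < l" shows "(Ip has_real_derivative Dp l) (at l)"
proof -
  have "(Ip has_real_derivative Dp l) (at l within {0<..})"
    unfolding has_field_derivative_iff tendsto_at_iff_sequentially comp_def
  proof (intro allI impI)
    fix X :: "nat \<Rightarrow> real" assume X: "\<forall>i. X i \<in> {0<..} - {l}" and XL: "X \<longlonglongrightarrow> l"
    have "Bseq X" using XL by (rule convergent_imp_Bseq[OF convergentI])
    then obtain K where K: "0 < K" "\<And>n. norm (X n) \<le> K" by (auto simp: Bseq_def)
    define q where "q i r = (gg (X i) r - gg l r) / (X i - l)" for i r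
    have eq: "(Ip (X i) - Ip l) / (X i - l) = (\<integral>r. q i r \<partial>\<pi>)" for i
    proof -
      have "0 \<le> X i" using X by (auto simp: less_imp_le)
      then show ?thesis unfolding q_def Ip_def using int_gg[of "X i"] int_gg[of l] assms
        by (simp add: integral_diff)
    qed
    have "(\<lambda>i. \<integral>r. q i r \<partial>\<pi>) \<longlonglongrightarrow> (\<integral>r. dg l r \<partial>\<pi>)"
    proof (rule integral_dominated_convergence[where w="\<lambda>r. (1 + K + l) * ww r"])
      show "dg l \<in> borel_measurable \<pi>" by (rule meas_dg)
      show "q i \<in> borel_measurable \<pi>" for i unfolding q_def by (rule meas) measurable
      show "integrable \<pi> (\<lambda>r. (1 + K + l) * ww r)" using int_ww by simp
      show "AE r in \<pi>. (\<lambda>i. q i r) \<longlonglongrightarrow> dg l r"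
      proof (rule AE_I2)
        fix r
        have "((\<lambda>y. (gg y r - gg l r) / (y - l)) \<longlongrightarrow> dg l r) (at l within UNIV)"
          using gg_deriv[of r l] unfolding has_field_derivative_iff by simp
        then show "(\<lambda>i. q i r) \<longlonglongrightarrow> dg l r"
          unfolding tendsto_at_iff_sequentially comp_def q_def using X XL by auto
      qed
      show "AE r in \<pi>. norm (q i r) \<le> (1 + K + l) * ww r" for i
        using AE_pos
      proof eventually_elim
        fix r :: real assume r: "0 < r"
        have xi: "0 < X i" "X i \<noteq> l" using X by auto
        have "X i \<le> K" using K(2)[of i] by simp
        define a where "a = max (X i) l"
        define b where "b = min (X i) l"
        have ab: "0 \<le> b" "b < a" using xi assms unfolding a_def b_def by auto
        have qe: "q i r = (gg a r - gg b r) / (a - b)"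
          unfolding q_def a_def b_def using xi
          by (cases "X i \<le> l") (auto simp: max_def min_def divide_simps algebra_simps)
        note B5[OF r ab(1) less_imp_le[OF ab(2)]]
        then have "0 \<le> q i r" "q i r \<le> dg a r" using ab unfolding qe
          by (auto simp: divide_simps mult.commute)
        moreover have "dg a r \<le> (1 + a) * ww r" using B2[OF r] ab by auto
        moreover have "(1 + a) * ww r \<le> (1 + K + l) * ww r"
          using \<open>X i \<le> K\<close> K r assms unfolding a_def ww_def by (intro mult_right_mono) auto
        ultimately show "norm (q i r) \<le> (1 + K + l) * ww r" by simp
      qed
    qed
    then show "(\<lambda>i. (Ip (X i) - Ip l) / (X i - l)) \<longlonglongrightarrow> Dp l"
      using eq unfolding Dp_def by simp
  qed
  then show ?thesis using at_within_open[of l "{0<..}"] assms by simp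
qed

lemma Dp_cont: assumes "0 \<le> a" shows "continuous_on {a..b} Dp"
proof (rule continuous_on_sequentiallyI)
  fix u x assume u: "\<forall>n. u n \<in> {a..b}" and x: "x \<in> {a..b}" and ux: "u \<longlonglongrightarrow> x"
  show "(\<lambda>n. Dp (u n)) \<longlonglongrightarrow> Dp x" unfolding Dp_def
  proof (rule integral_dominated_convergence[where w="\<lambda>r. (1 + b) * ww r"])
    show "dg x \<in> borel_measurable \<pi>" by (rule meas_dg)
    show "dg (u n) \<in> borel_measurable \<pi>" for n by (rule meas_dg)
    show "integrable \<pi> (\<lambda>r. (1 + b) * ww r)" using int_ww by simp
    show "AE r in \<pi>. (\<lambda>n. dg (u n) r) \<longlonglongrightarrow> dg x r"
      unfolding dg_def by (intro AE_I2 tendsto_intros ux)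
    show "AE r in \<pi>. norm (dg (u n) r) \<le> (1 + b) * ww r" for n
      using AE_pos
    proof eventually_elim
      fix r :: real assume r: "0 < r"
      have un: "0 \<le> u n" "u n \<le> b" using u assms by (auto intro: order_trans)
      have "dg (u n) r \<le> (1 + u n) * ww r" using B2[OF r un(1)] by simp
      also have "\<dots> \<le> (1 + b) * ww r" using un r unfolding ww_def by (intro mult_right_mono) auto
      finally show "norm (dg (u n) r) \<le> (1 + b) * ww r" using B2[OF r un(1)] by simp
    qed
  qed
qed

lemma Ip_mono: assumes "0 \<le> b" "b \<le> a" shows "Ip b \<le> Ip a"
  unfolding Ip_def
proof (rule integral_mono_AE)
  show "integrable \<pi> (gg b)" "integrable \<pi> (gg a)" using int_gg assms by auto
  show "AE r in \<pi>. gg b r \<le> gg a r" using AE_pos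
    by eventually_elim (use B5[OF _ assms] in fastforce)
qed

lemma Ip_nonneg: assumes "0 \<le> l" shows "0 \<le> Ip l"
  unfolding Ip_def by (rule integral_nonneg_AE) (use AE_pos B1 assms in \<open>auto elim: AE_mp\<close>)

lemma Ip_le: assumes "0 \<le> l" shows "Ip l \<le> l * Dp l"
proof -
  have "Ip l \<le> (\<integral>r. l * dg l r \<partial>\<pi>)" unfolding Ip_def
  proof (rule integral_mono_AE)
    show "integrable \<pi> (gg l)" using int_gg assms by auto
    show "integrable \<pi> (\<lambda>r. l * dg l r)" using int_dg assms by auto
    show "AE r in \<pi>. gg l r \<le> l * dg l r" using AE_pos
      by eventually_elim (use B1 assms in auto)
  qed
  then show ?thesis unfolding Dp_def by simp
qed

lemma Dp_le: assumes "0 \<le> l" shows "l * Dp l \<le> 2 * Ip l"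
proof -
  have "(\<integral>r. l * dg l r \<partial>\<pi>) \<le> (\<integral>r. 2 * gg l r \<partial>\<pi>)"
  proof (rule integral_mono_AE)
    show "integrable \<pi> (\<lambda>r. 2 * gg l r)" using int_gg assms by auto
    show "integrable \<pi> (\<lambda>r. l * dg l r)" using int_dg assms by auto
    show "AE r in \<pi>. l * dg l r \<le> 2 * gg l r" using AE_pos
      by eventually_elim (use B4 assms in auto)
  qed
  then show ?thesis unfolding Dp_def Ip_def by simp
qed

lemma AE_False_Ip: assumes "AE r in \<pi>. False" shows "Ip l = 0"
proof -
  have "Ip l = (\<integral>r. 0 \<partial>\<pi>)" unfolding Ip_def
    by (rule integral_cong_AE) (use meas_gg assms in \<open>auto elim: AE_mp\<close>)
  then show ?thesis by simp
qed

lemma Ip1_zero: assumes "Ip 1 = 0" shows "AE r in \<pi>. False"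
proof -
  have "AE r in \<pi>. gg 1 r = 0"
    using assms unfolding Ip_def
    by (subst (asm) integral_nonneg_eq_0_iff_AE) (use int_gg AE_pos B1 in \<open>auto elim: AE_mp\<close>)
  then show ?thesis using AE_pos by eventually_elim (use B7[of _ "1::real"] in fastforce)
qed

lemma Dp_strict: assumes "0 \<le> b" "b < a" shows "Dp b < Dp a \<or> (AE r in \<pi>. False)"
proof (cases "Dp b < Dp a")
  case True then show ?thesis by simp
next
  case n: False
  have ia: "integrable \<pi> (dg a)" "integrable \<pi> (dg b)" using int_dg assms by auto
  have d: "Dp a - Dp b = (\<integral>r. dg a r - dg b r \<partial>\<pi>)" unfolding Dp_def using ia by simp
  have nn: "AE r in \<pi>. 0 \<le> dg a r - dg b r" using AE_pos
    by eventually_elim (use B6[OF _ assms(2)] in force)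
  have "0 \<le> (\<integral>r. dg a r - dg b r \<partial>\<pi>)" by (rule integral_nonneg_AE[OF nn])
  with n d have "(\<integral>r. dg a r - dg b r \<partial>\<pi>) = 0" by simp
  then have "AE r in \<pi>. dg a r - dg b r = 0"
    by (subst (asm) integral_nonneg_eq_0_iff_AE) (use ia nn in auto)
  then have "AE r in \<pi>. False" using AE_pos by eventually_elim (use B6[OF _ assms(2)] in force)
  then show ?thesis by simp
qed

end



context bm begin

abbreviation "Psi \<equiv> psi \<alpha> \<beta> \<pi>"
definition PD where "PD l = \<alpha> + 2 * \<beta> * l + Dp l"

lemma psi_deriv: assumes "0 < l" shows "(Psi has_real_derivative PD l) (at l)"
proof -
  have "((\<lambda>l. \<alpha> * l + \<beta> * l\<^sup>2 + Ip l) has_real_derivative (\<alpha> + 2 * \<beta> * l + Dp l)) (at l)"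
    by (auto intro!: derivative_eq_intros Ip_deriv assms)
  then show ?thesis unfolding psi_eq[abs_def] PD_def by (simp add: algebra_simps)
qed

lemma deriv_psi: "0 < l \<Longrightarrow> deriv Psi l = PD l"
  using psi_deriv DERIV_imp_deriv by blast

lemma psi_cont: assumes "0 < a" shows "continuous_on {a..b} Psi"
proof (rule continuous_at_imp_continuous_on, intro ballI)
  fix x assume "x \<in> {a..b}"
  then have "0 < x" using assms by auto
  then show "isCont Psi x" using psi_deriv DERIV_isCont by blast
qed

lemma PD_cont: assumes "0 \<le> a" shows "continuous_on {a..b} PD"
  unfolding PD_def by (intro continuous_intros Dp_cont assms)

lemma psi_mono: assumes "0 \<le> b" "b \<le> a" shows "Psi b \<le> Psi a"
proof -
  have "\<alpha> * b \<le> \<alpha> * a" using alpha assms by (intro mult_left_mono) auto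
  moreover have "\<beta> * b\<^sup>2 \<le> \<beta> * a\<^sup>2" using beta assms by (intro mult_left_mono power_mono) auto
  ultimately show ?thesis unfolding psi_eq using Ip_mono[OF assms] by simp
qed

lemma psi_nonneg: "0 \<le> l \<Longrightarrow> 0 \<le> Psi l"
  using alpha beta Ip_nonneg unfolding psi_eq by simp

lemma psi_le: assumes "0 \<le> l" shows "Psi l \<le> l * PD l"
proof -
  have "\<beta> * l\<^sup>2 \<le> 2 * \<beta> * l * l" using beta assms by (simp add: power2_eq_square)
  then show ?thesis unfolding psi_eq PD_def using Ip_le[OF assms] by (simp add: algebra_simps)
qed

lemma PD_le: assumes "0 \<le> l" shows "l * PD l \<le> 2 * Psi l"
proof -
  have "\<alpha> * l \<le> 2 * (\<alpha> * l)" using alpha assms by simp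
  then show ?thesis unfolding psi_eq PD_def using Dp_le[OF assms]
    by (simp add: algebra_simps power2_eq_square)
qed

lemma AE_False_Dp: assumes "AE r in \<pi>. False" shows "Dp l = 0"
proof -
  have "Dp l = (\<integral>r. 0 \<partial>\<pi>)" unfolding Dp_def
    by (rule integral_cong_AE) (use meas_dg assms in \<open>auto elim: AE_mp\<close>)
  then show ?thesis by simp
qed

lemma psi1_zero: assumes "Psi 1 = 0" shows "Psi l = 0"
proof -
  have "\<alpha> + \<beta> + Ip 1 = 0" using assms unfolding psi_eq by simp
  then have "\<alpha> = 0" "\<beta> = 0" "Ip 1 = 0" using alpha beta Ip_nonneg[of 1] by auto
  then show ?thesis using AE_False_Ip[OF Ip1_zero] unfolding psi_eq by simp
qed

lemma delta_ex: assumes "delta_exp Psi > 1"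
  shows "\<exists>c C0. 1 < c \<and> 0 < C0 \<and> (\<forall>m l. 1 \<le> m \<and> m \<le> l \<longrightarrow>
       C0 * Psi m * m powr (- c) \<le> Psi l * l powr (- c))"
proof -
  from assms obtain x where x: "x \<in> {ereal c | c. c \<ge> 0 \<and> (\<exists>C>0. \<forall>m l. 1 \<le> m \<and> m \<le> l \<longrightarrow>
       C * Psi m * m powr (- c) \<le> Psi l * l powr (- c))}" "1 < x"
    unfolding delta_exp_def less_Sup_iff by blast
  then show ?thesis by auto
qed

end

locale bmc = bm +
  fixes c C0 :: real
  assumes c1: "1 < c" and C0: "0 < C0"
    and grow: "\<And>m l. 1 \<le> m \<Longrightarrow> m \<le> l \<Longrightarrow> C0 * Psi m * m powr (- c) \<le> Psi l * l powr (- c)"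
    and psi1: "0 < Psi 1"
begin

lemma growth: assumes "1 \<le> l" shows "C0 * Psi 1 * l powr c \<le> Psi l"
proof -
  have "C0 * Psi 1 \<le> Psi l * l powr (- c)" using grow[of 1 l] assms by simp
  then have "C0 * Psi 1 * l powr c \<le> Psi l * l powr (- c) * l powr c"
    using assms by (intro mult_right_mono) auto
  also have "\<dots> = Psi l" using assms by (simp add: powr_add[symmetric])
  finally show ?thesis .
qed

lemma unbounded: "\<exists>l\<ge>1. T \<le> PD l"
proof -
  define y where "y = \<bar>T\<bar> / (C0 * Psi 1)"
  define l where "l = max 1 (y powr (1 / (c - 1)))"
  have y0: "0 \<le> y" unfolding y_def using C0 psi1 by auto
  have l1: "1 \<le> l" unfolding l_def by simp
  have "y = (y powr (1 / (c - 1))) powr (c - 1)" using c1 y0 by (simp add: powr_powr)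
  also have "\<dots> \<le> l powr (c - 1)" unfolding l_def using c1 by (intro powr_mono2) auto
  finally have yl: "y \<le> l powr (c - 1)" .
  have "\<bar>T\<bar> = C0 * Psi 1 * y" unfolding y_def using C0 psi1 by simp
  also have "\<dots> \<le> C0 * Psi 1 * l powr (c - 1)" using yl C0 psi1 by (intro mult_left_mono) auto
  also have "\<dots> = C0 * Psi 1 * l powr c / l" using l1 by (simp add: powr_diff)
  also have "\<dots> \<le> Psi l / l" using growth[OF l1] l1 by (intro divide_right_mono) auto
  also have "\<dots> \<le> PD l" using psi_le[of l] l1 by (simp add: divide_simps mult.commute)
  finally show ?thesis using l1 by (intro exI[of _ l]) auto
qed

lemma PD_strict: assumes "0 \<le> b" "b < a" shows "PD b < PD a"
proof (cases "\<beta> > 0 \<or> \<not> (AE r in \<pi>. False)")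
  case True
  show ?thesis
  proof (cases "AE r in \<pi>. False")
    case AF: True
    with True have "\<beta> > 0" by auto
    then show ?thesis unfolding PD_def using AE_False_Dp[OF AF] assms by simp
  next
    case False
    then have "Dp b < Dp a" using Dp_strict[OF assms] by auto
    then show ?thesis unfolding PD_def using beta assms
      by (intro add_le_less_mono) (auto intro: mult_left_mono)
  qed
next
  case False
  then have b0: "\<beta> = 0" and AF: "AE r in \<pi>. False" using beta by auto
  have "PD l = \<alpha>" for l unfolding PD_def using b0 AE_False_Dp[OF AF] by simp
  then show ?thesis using unbounded[of "\<alpha> + 1"] by auto
qed

lemma PD_inj: "inj_on PD {0<..}"
  by (rule strict_mono_on_imp_inj_on) (auto simp: strict_mono_on_def intro!: PD_strict)

end



lemma sqrt_bound:
  fixes L X y :: real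
  assumes "0 < L" "L \<le> X" "0 \<le> y" "1 \<le> y\<^sup>2 * L"
  shows "1 / sqrt X \<le> y"
proof -
  have "1 / sqrt X \<le> 1 / sqrt L" using assms by (intro divide_left_mono) auto
  also have "\<dots> = sqrt (1 / L)" by (simp add: real_sqrt_divide)
  also have "\<dots> \<le> sqrt (y\<^sup>2)" using assms by (intro real_sqrt_le_mono) (simp add: divide_simps mult.commute)
  also have "\<dots> = y" using assms by simp
  finally show ?thesis .
qed

lemma sq_powr: "0 < (x::real) \<Longrightarrow> (x powr a)\<^sup>2 = x powr (2 * a)"
  by (simp add: power2_eq_square powr_add[symmetric])

context bmc begin

definition KK where "KK = 2 * sqrt 2 + sqrt (2 / C0) * 2 powr (c/2) * 2 / (c - 1)"

lemma Int_lower: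
  assumes v: "1 \<le> v" and b: "v < b"
  shows "(b - v) / 2 * Psi ((v + b) / 2) \<le> integral {v..b} Psi"
proof -
  define m where "m = (v + b) / 2"
  have vm: "v \<le> m" "m \<le> b" using b unfolding m_def by auto
  have int: "Psi integrable_on {x..y}" if "1 \<le> x" for x y
    by (rule integrable_continuous_interval[OF psi_cont]) (use that in auto)
  have "integral {v..m} Psi + integral {m..b} Psi = integral {v..b} Psi"
    by (rule Henstock_Kurzweil_Integration.integral_combine[OF vm int]) (use v in auto)
  moreover have "0 \<le> integral {v..m} Psi"
    by (rule integral_nonneg[OF int]) (use v psi_nonneg in auto)
  moreover have "integral {m..b} (\<lambda>_. Psi m) \<le> integral {m..b} Psi"
    by (rule integral_le) (use int v vm psi_mono in auto)
  moreover have "integral {m..b} (\<lambda>_. Psi m) = (b - m) * Psi m" using vm by simp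
  moreover have "(b - v) / 2 * Psi m = (b - m) * Psi m" unfolding m_def by (simp add: field_simps)
  ultimately show ?thesis unfolding m_def[symmetric] by linarith
qed

lemma I_bound:
  assumes v: "1 \<le> v"
  shows "I_fun Psi v \<le> ennreal (KK * sqrt v / sqrt (Psi v))"
proof -
  define P where "P = Psi v"
  have P: "0 < P" unfolding P_def using psi_mono[of 1 v] psi1 v by auto
  define A where "A = sqrt (2 / P)"
  define B where "B = sqrt (2 / (C0 * P)) * (2 * v) powr (c / 2)"
  define e where "e = - (1 + c) / 2"
  have A0: "0 \<le> A" "0 \<le> B" unfolding A_def B_def using P C0 by auto
  define h where "h x = (if x \<in> {0..v} then A * x powr (-1/2) else 0) + (if x \<in> {v..} then B * x powr e else 0)" for x
  have h0: "0 \<le> h x" for x unfolding h_def using A0 by auto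
  have hm: "h \<in> borel_measurable borel" unfolding h_def by measurable
  define T where "T = A * (v powr (1/2) / (1/2)) + B * (- (v powr (e + 1)) / (e + 1))"
  have hint: "(h has_integral T) UNIV"
  proof -
    have "((\<lambda>x. x powr (-1/2)) has_integral (v powr (-1/2 + 1) / (-1/2 + 1))) {0..v}"
      by (rule has_integral_powr_from_0) (use v in auto)
    then have j1: "((\<lambda>x. A * x powr (-1/2)) has_integral (A * (v powr (1/2) / (1/2)))) {0..v}"
      by (auto dest: has_integral_mult_right)
    have "((\<lambda>x. x powr e) has_integral (- (v powr (e + 1)) / (e + 1))) {v..}"
      by (rule has_integral_powr_to_inf) (use v c1 in \<open>auto simp: e_def\<close>)
    then have j2: "((\<lambda>x. B * x powr e) has_integral (B * (- (v powr (e + 1)) / (e + 1)))) {v..}"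
      by (rule has_integral_mult_right)
    have i1: "((\<lambda>x. if x \<in> {0..v} then A * x powr (-1/2) else 0) has_integral (A * (v powr (1/2) / (1/2)))) UNIV"
      using j1 by (subst has_integral_restrict) auto
    have i2: "((\<lambda>x. if x \<in> {v..} then B * x powr e else 0) has_integral (B * (- (v powr (e + 1)) / (e + 1)))) UNIV"
      using j2 by (subst has_integral_restrict) auto
    show ?thesis unfolding h_def T_def by (rule has_integral_add[OF i1 i2])
  qed
  have pw: "1 / sqrt (integral {v..b} Psi) \<le> h (b - v)" if b: "v < b" for b
  proof -
    define t where "t = b - v"
    have t: "0 < t" unfolding t_def using b by simp
    note IL = Int_lower[OF v b]
    show ?thesis
    proof (cases "t \<le> v")
      case True
      have "t / 2 * P \<le> t / 2 * Psi ((v+b)/2)"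
        using t v b unfolding P_def by (intro mult_left_mono psi_mono) auto
      then have L: "t / 2 * P \<le> integral {v..b} Psi" using IL unfolding t_def by linarith
      have "1 / sqrt (integral {v..b} Psi) \<le> A * t powr (-1/2)"
      proof (rule sqrt_bound[OF _ L])
        show "0 < t / 2 * P" using t P by simp
        show "0 \<le> A * t powr (-1/2)" using A0 by simp
        have "(A * t powr (-1/2))\<^sup>2 * (t / 2 * P) = (2 / P) * t powr (-1) * (t / 2 * P)"
          unfolding A_def power_mult_distrib using P t by (simp add: sq_powr)
        also have "\<dots> = 1"
        proof -
          have "t powr (-1) = 1 / t" using t by (simp add: powr_minus inverse_eq_divide)
          then show ?thesis using P t by (simp add: field_simps)
        qed
        finally show "1 \<le> (A * t powr (-1/2))\<^sup>2 * (t / 2 * P)" by simp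
      qed
      also have "\<dots> \<le> h t" unfolding h_def using True t A0 by auto
      finally show ?thesis unfolding t_def .
    next
      case False
      define m where "m = (v + b) / 2"
      have m: "v \<le> m" "t / 2 \<le> m" "0 < m" using b v unfolding m_def t_def by auto
      have "C0 * P * v powr (- c) \<le> Psi m * m powr (- c)" unfolding P_def by (rule grow) (use v m in auto)
      then have "C0 * P * v powr (- c) * m powr c \<le> Psi m * m powr (- c) * m powr c"
        by (rule mult_right_mono) simp
      moreover have r1: "m powr (-c) * m powr c = 1" using m by (simp add: powr_add[symmetric])
      moreover have r2: "v powr (- c) * m powr c = m powr c / v powr c"
        by (simp add: powr_minus divide_inverse mult.commute)
      ultimately have pm: "C0 * P * (m powr c / v powr c) \<le> Psi m"
        by (simp add: mult.assoc)
      have "(t / (2 * v)) powr c \<le> (m / v) powr c"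
        using m v t c1 by (intro powr_mono2) (auto simp: divide_simps)
      also have "\<dots> = m powr c / v powr c" using m v by (simp add: powr_divide)
      finally have "C0 * P * (t / (2 * v)) powr c \<le> C0 * P * (m powr c / v powr c)"
        using C0 P by (intro mult_left_mono) auto
      with pm have "C0 * P * (t / (2 * v)) powr c \<le> Psi m" by linarith
      then have "t / 2 * (C0 * P * (t / (2 * v)) powr c) \<le> t / 2 * Psi m"
        using t by (intro mult_left_mono) auto
      then have L: "t / 2 * (C0 * P * (t / (2 * v)) powr c) \<le> integral {v..b} Psi"
        using IL unfolding m_def t_def by linarith
      have "1 / sqrt (integral {v..b} Psi) \<le> B * t powr e"
      proof (rule sqrt_bound[OF _ L])
        show "0 < t / 2 * (C0 * P * (t / (2 * v)) powr c)" using t P C0 v by simp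
        show "0 \<le> B * t powr e" using A0 by simp
        have e2: "2 * e = - (1 + c)" unfolding e_def by simp
        have "(B * t powr e)\<^sup>2 * (t / 2 * (C0 * P * (t / (2 * v)) powr c))
            = (2 / (C0 * P)) * (2 * v) powr c * t powr (- (1 + c)) * (t / 2 * (C0 * P * (t powr c / (2 * v) powr c)))"
          unfolding B_def power_mult_distrib using P t C0 v e2
          by (simp add: sq_powr powr_divide)
        also have "\<dots> = 1"
        proof -
          have "t powr (1 + c) = t * t powr c" using t by (simp add: powr_add)
          then have "t powr (- (1 + c)) = 1 / (t * t powr c)" by (subst powr_minus) (simp add: inverse_eq_divide)
          moreover have "0 < t powr c" "0 < (2 * v) powr c" using t v by auto
          ultimately show ?thesis using P t C0 v by (simp add: field_simps)
        qed
        finally show "1 \<le> (B * t powr e)\<^sup>2 * (t / 2 * (C0 * P * (t / (2 * v)) powr c))" by simp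
      qed
      also have "\<dots> \<le> h t" unfolding h_def using False t A0 by auto
      finally show ?thesis unfolding t_def .
    qed
  qed
  have "I_fun Psi v \<le> (\<integral>\<^sup>+ b. ennreal (h (b - v)) \<partial>lborel)"
    unfolding I_fun_def
  proof (rule nn_integral_mono)
    fix b :: real
    show "indicator {v<..} b * ennreal (1 / sqrt (integral {v..b} Psi)) \<le> ennreal (h (b - v))"
      using pw[of b] by (cases "v < b") (auto intro: ennreal_leI)
  qed
  also have "\<dots> = (\<integral>\<^sup>+ x. ennreal (h x) \<partial>lborel)"
    using nn_integral_real_affine[of "\<lambda>b. ennreal (h (b - v))" 1 v] hm by simp
  also have "\<dots> = ennreal T"
    by (rule nn_integral_has_integral_lborel[OF _ _ hint]) (use hm h0 in auto)
  also have "T = KK * sqrt v / sqrt (Psi v)"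
  proof -
    have a1: "A * (v powr (1/2) / (1/2)) = 2 * sqrt 2 * sqrt v / sqrt P"
      unfolding A_def using v P by (simp add: powr_half_sqrt real_sqrt_divide)
    moreover have a2: "B * (- (v powr (e + 1)) / (e + 1)) = sqrt (2 / C0) * 2 powr (c/2) * 2 / (c - 1) * sqrt v / sqrt P"
    proof -
      have "e + 1 = (1 - c) / 2" unfolding e_def by (simp add: field_simps)
      have "(2 * v) powr (c / 2) * v powr ((1 - c) / 2) = 2 powr (c/2) * (v powr (c / 2) * v powr ((1 - c) / 2))"
        using v by (simp add: powr_mult)
      also have "v powr (c / 2) * v powr ((1 - c) / 2) = v powr (1/2)"
        using v by (simp add: powr_add[symmetric] add_divide_distrib[symmetric])
      also have "v powr (1/2) = sqrt v" using v by (simp add: powr_half_sqrt)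
      finally have WV: "(2 * v) powr (c / 2) * v powr ((1 - c) / 2) = 2 powr (c/2) * sqrt v" .
      have s2: "sqrt (2 / (C0 * P)) = sqrt (2 / C0) / sqrt P" using P C0 by (simp add: real_sqrt_divide real_sqrt_mult)
      have "B * (- (v powr (e + 1)) / (e + 1)) = sqrt (2 / C0) / sqrt P * 2 / (c - 1) * ((2 * v) powr (c / 2) * v powr ((1 - c) / 2))"
      proof -
        have sp: "0 < sqrt P" using P by simp
        have "1 - c \<noteq> 0" "c - 1 \<noteq> 0" using c1 by auto
        then show ?thesis unfolding B_def \<open>e + 1 = (1 - c) / 2\<close> s2 using sp
          by (simp add: divide_simps) (simp add: algebra_simps)
      qed
      then show ?thesis unfolding WV by (simp add: field_simps)
    qed
    ultimately have "T = 2 * sqrt 2 * sqrt v / sqrt P + sqrt (2 / C0) * 2 powr (c/2) * 2 / (c - 1) * sqrt v / sqrt P"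
      unfolding T_def by simp
    also have "\<dots> = KK * sqrt v / sqrt P"
      unfolding KK_def by (simp add: distrib_right add_divide_distrib)
    finally show ?thesis unfolding P_def .
  qed
  finally show ?thesis .
qed

end



theorem lemma3p2:
  fixes \<alpha> \<beta> :: real and \<pi> :: "real measure"
  assumes "branching_params \<alpha> \<beta> \<pi>"
    and "delta_exp (psi \<alpha> \<beta> \<pi>) > 1"
  shows "\<exists>C>0. \<forall>v r. v > 1 \<and> r > 0 \<and> ennreal r \<le> I_fun (psi \<alpha> \<beta> \<pi>) v \<longrightarrow>
           4 * C / r\<^sup>2 \<in> deriv (psi \<alpha> \<beta> \<pi>) ` {0<..} \<and>
           v \<le> the_inv_into {0<..} (deriv (psi \<alpha> \<beta> \<pi>)) (4 * C / r\<^sup>2)"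
proof -
  interpret bm \<alpha> \<beta> \<pi> by unfold_locales (rule assms(1))
  obtain c C0 where cc: "1 < c" "0 < C0" "\<forall>m l. 1 \<le> m \<and> m \<le> l \<longrightarrow>
       C0 * Psi m * m powr (- c) \<le> Psi l * l powr (- c)"
    using delta_ex[OF assms(2)] by blast
  show ?thesis
  proof (cases "Psi 1 = 0")
    case True
    then have z: "Psi = (\<lambda>_. 0)" using psi1_zero by auto
    have "I_fun Psi v = 0" for v unfolding I_fun_def z by simp
    then show ?thesis by (intro exI[of _ 1]) auto
  next
    case False
    then have p1: "0 < Psi 1" using psi_nonneg[of 1] by simp
    interpret bmc \<alpha> \<beta> \<pi> c C0 by unfold_locales (use cc p1 in auto)
    define C where "C = KK\<^sup>2 / 2"
    have KK: "0 < KK" unfolding KK_def using cc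
      by (intro add_pos_nonneg) (auto intro!: divide_nonneg_nonneg mult_nonneg_nonneg)
    show ?thesis
    proof (intro exI[of _ C] conjI)
      show "0 < C" unfolding C_def using KK by simp
      show "\<forall>v r. v > 1 \<and> r > 0 \<and> ennreal r \<le> I_fun Psi v \<longrightarrow>
           4 * C / r\<^sup>2 \<in> deriv Psi ` {0<..} \<and> v \<le> the_inv_into {0<..} (deriv Psi) (4 * C / r\<^sup>2)"
      proof (intro allI impI)
        fix v r assume H: "v > 1 \<and> r > 0 \<and> ennreal r \<le> I_fun Psi v"
        then have v: "1 < v" and r: "0 < r" and rI: "ennreal r \<le> I_fun Psi v" by auto
        define P where "P = Psi v"
        have P: "0 < P" unfolding P_def using psi_mono[of 1 v] p1 v by auto
        have "ennreal r \<le> ennreal (KK * sqrt v / sqrt P)"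
          using rI I_bound[of v] v unfolding P_def by (auto intro: order_trans)
        then have rle: "r \<le> KK * sqrt v / sqrt P"
          using KK v P by (subst (asm) ennreal_le_iff) auto
        have "r\<^sup>2 \<le> (KK * sqrt v / sqrt P)\<^sup>2" using rle r by (intro power_mono) auto
        also have "\<dots> = KK\<^sup>2 * v / P" using v P by (simp add: power_divide power_mult_distrib)
        finally have r2: "r\<^sup>2 \<le> KK\<^sup>2 * v / P" .
        have "0 < v * PD v" using psi_le[of v] v P unfolding P_def by linarith
        then have PD0: "0 < PD v" using v by (simp add: zero_less_mult_iff)
        have PDv: "PD v \<le> 2 * P / v" using PD_le[of v] v unfolding P_def by (simp add: divide_simps mult.commute)
        have "PD v * r\<^sup>2 \<le> PD v * (KK\<^sup>2 * v / P)" using r2 PD0 by (intro mult_left_mono) auto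
        also have "\<dots> \<le> 2 * P / v * (KK\<^sup>2 * v / P)" using PDv P v by (intro mult_right_mono) auto
        also have "\<dots> = 4 * C" unfolding C_def using P v by (simp add: field_simps)
        finally have "PD v * r\<^sup>2 \<le> 4 * C" .
        then have yv: "PD v \<le> 4 * C / r\<^sup>2" using r by (simp add: divide_simps)
        define y where "y = 4 * C / r\<^sup>2"
        obtain u where u: "1 \<le> u" "y \<le> PD u" using unbounded[of y] by blast
        define u' where "u' = max u v"
        have "PD u \<le> PD u'" unfolding u'_def using PD_strict[of u "max u v"] u by (cases "u < v") auto
        with u have yu: "y \<le> PD u'" by simp
        obtain x where x: "v \<le> x" "x \<le> u'" "PD x = y"
          using IVT'[of PD v y u', OF _ yu _ PD_cont] yv v unfolding y_def u'_def by auto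
        have x0: "0 < x" using x v by simp
        have dx: "deriv Psi x = y" using deriv_psi[OF x0] x by simp
        have inj: "inj_on (deriv Psi) {0<..}"
          using PD_inj by (rule inj_on_cong[THEN iffD2, rotated]) (simp add: deriv_psi)
        show "4 * C / r\<^sup>2 \<in> deriv Psi ` {0<..} \<and> v \<le> the_inv_into {0<..} (deriv Psi) (4 * C / r\<^sup>2)"
        proof
          show "4 * C / r\<^sup>2 \<in> deriv Psi ` {0<..}" using dx x0 unfolding y_def by (auto intro: rev_image_eqI)
          have "the_inv_into {0<..} (deriv Psi) (4 * C / r\<^sup>2) = x"
            using the_inv_into_f_f[OF inj, of x] x0 dx unfolding y_def by simp
          then show "v \<le> the_inv_into {0<..} (deriv Psi) (4 * C / r\<^sup>2)" using x by simp
        qed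
      qed
    qed
  qed
qed



end
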